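(* Let $D$ be a strongly connected digraph containing at least one cycle, with girth $g$. Let $k$ and $p$ be integers with $k\ge g-1\ge p\ge 1$, and put $\hat k=\lceil k/p\rceil\, p$. If $D$ contains no cycle whose length is congruent to $r$ modulo $\hat k$ for any $r\in\{-p+2,-p+3,\ldots,0,\ldots,p\}$, then $\chi_A(D)\le \lceil k/p\rceil$.
   Context: Digraphs are finite and loopless; paths and cycles are directed. The girth of a digraph is the length of a shortest directed cycle. A set of vertices is acyclic if the subdigraph it induces contains no directed cycle. The dichromatic number $\chi_A(D)$ is the minimum $k$ such that $V(D)$ can be colored with $k$ colors so that every color class is acyclic. A digraph is strongly connected if for every ordered pair of distinct vertices $u,v$ there is a directed $uv$-path. *)

theory Defs
  imports Complex_Main "HOL-Number_Theory.Cong"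
begin

definition digraph :: "'a set \<Rightarrow> ('a \<times> 'a) set \<Rightarrow> bool" where
  "digraph V E \<longleftrightarrow> finite V \<and> E \<subseteq> V \<times> V \<and> (\<forall>v. (v, v) \<notin> E)"

definition is_cycle :: "('a \<times> 'a) set \<Rightarrow> 'a list \<Rightarrow> bool" where
  "is_cycle E c \<longleftrightarrow> c \<noteq> [] \<and> distinct c \<and>
     (\<forall>i < length c. (c ! i, c ! ((i + 1) mod length c)) \<in> E)"

definition girth :: "('a \<times> 'a) set \<Rightarrow> nat" where
  "girth E = (LEAST l. \<exists>c. is_cycle E c \<and> length c = l)"

definition acyclic_set :: "('a \<times> 'a) set \<Rightarrow> 'a set \<Rightarrow> bool" where
  "acyclic_set E S \<longleftrightarrow> \<not> (\<exists>c. is_cycle E c \<and> set c \<subseteq> S)"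

definition dichromatic_number :: "'a set \<Rightarrow> ('a \<times> 'a) set \<Rightarrow> nat" where
  "dichromatic_number V E = (LEAST k. \<exists>f :: 'a \<Rightarrow> nat.
      (\<forall>v \<in> V. f v < k) \<and> (\<forall>i < k. acyclic_set E {v \<in> V. f v = i}))"

definition strongly_connected :: "'a set \<Rightarrow> ('a \<times> 'a) set \<Rightarrow> bool" where
  "strongly_connected V E \<longleftrightarrow> (\<forall>u \<in> V. \<forall>v \<in> V. u \<noteq> v \<longrightarrow> (u, v) \<in> E\<^sup>+)"

end

theory Submission
  imports Defs
begin

definition pth :: "('a \<times> 'a) set \<Rightarrow> 'a set \<Rightarrow> 'a \<Rightarrow> 'a \<Rightarrow> nat \<Rightarrow> bool" where
  "pth E S a b n \<longleftrightarrow> (\<exists>ps. distinct ps \<and> ps \<noteq> [] \<and> hd ps = a \<and> last ps = b \<and> set ps \<subseteq> S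
      \<and> length ps = Suc n \<and> (\<forall>i. Suc i < length ps \<longrightarrow> (ps!i, ps!Suc i) \<in> E))"

definition good :: "('a \<times> 'a) set \<Rightarrow> 'a set \<Rightarrow> ('a \<Rightarrow> nat) \<Rightarrow> bool" where
  "good E S d \<longleftrightarrow> (\<forall>c. is_cycle E c \<and> set c \<subseteq> S \<longrightarrow>
     (\<exists>i<length c. \<exists>c'. is_cycle E c' \<and>
        int (length c') = int (d (c!i)) - int (d (c!((i+1) mod length c))) + 1))"

lemma pth_mono: "pth E S a b n \<Longrightarrow> S \<subseteq> T \<Longrightarrow> pth E T a b n"
  unfolding pth_def by blast

lemma pth_refl: "x \<in> S \<Longrightarrow> pth E S x x 0"
  unfolding pth_def by (intro exI[of _ "[x]"]) auto

lemma pth_cons: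
  assumes "pth E S y v n" "x \<notin> S" "(x,y) \<in> E"
  shows "pth E (insert x S) x v (Suc n)"
proof -
  obtain ps where ps: "distinct ps" "ps \<noteq> []" "hd ps = y" "last ps = v" "set ps \<subseteq> S"
    "length ps = Suc n" and ar: "\<forall>i. Suc i < length ps \<longrightarrow> (ps!i, ps!Suc i) \<in> E"
    using assms(1) unfolding pth_def by blast
  have "\<forall>i. Suc i < length (x#ps) \<longrightarrow> ((x#ps)!i, (x#ps)!Suc i) \<in> E"
  proof (intro allI impI)
    fix i assume "Suc i < length (x#ps)"
    then show "((x#ps)!i, (x#ps)!Suc i) \<in> E"
      using ar ps assms(3) by (cases i) (auto simp: hd_conv_nth)
  qed
  moreover have "x \<notin> set ps" using ps assms(2) by blast
  ultimately show ?thesis unfolding pth_def using ps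
    by (intro exI[of _ "x#ps"]) auto
qed

lemma pth_cycle:
  assumes "pth E S a b n" "(b,a) \<in> E"
  shows "\<exists>c. is_cycle E c \<and> length c = Suc n"
proof -
  obtain ps where ps: "distinct ps" "ps \<noteq> []" "hd ps = a" "last ps = b"
    "length ps = Suc n" and ar: "\<forall>i. Suc i < length ps \<longrightarrow> (ps!i, ps!Suc i) \<in> E"
    using assms(1) unfolding pth_def by blast
  have "is_cycle E ps" unfolding is_cycle_def
  proof (intro conjI allI impI)
    fix i assume i: "i < length ps"
    show "(ps ! i, ps ! ((i + 1) mod length ps)) \<in> E"
    proof (cases "Suc i < length ps")
      case True then show ?thesis using ar by simp
    next
      case False
      then have ii: "i = n" using i ps by simp
      then have "ps ! i = b" using ps by (simp add: last_conv_nth)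
      moreover have "(i+1) mod length ps = 0" using ii ps by simp
      moreover have "ps ! 0 = a" using ps by (simp add: hd_conv_nth)
      ultimately show ?thesis using assms(2) by simp
    qed
  qed (use ps in auto)
  then show ?thesis using ps by blast
qed

lemma cycle_closed:
  assumes c: "is_cycle E c" and sub: "set c \<subseteq> U" and ne: "set c \<inter> R \<noteq> {}"
    and cl: "\<forall>v\<in>R. \<forall>w\<in>U. (v,w) \<in> E \<longrightarrow> w \<in> R"
  shows "set c \<subseteq> R"
proof -
  let ?l = "length c"
  obtain j where j: "j < ?l" "c!j \<in> R" using ne by (auto simp: in_set_conv_nth)
  have l0: "?l > 0" using j(1) by linarith
  have all: "c!((j+m) mod ?l) \<in> R" for m
  proof (induction m)
    case 0 then show ?case using j by simp
  next
    case (Suc m)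
    let ?i = "(j+m) mod ?l"
    have "?i < ?l" using l0 by simp
    then have "(c!?i, c!((?i+1) mod ?l)) \<in> E" using c unfolding is_cycle_def by blast
    moreover have "(?i+1) mod ?l = (j + Suc m) mod ?l" by (simp add: mod_Suc_eq)
    moreover have "c!((j + Suc m) mod ?l) \<in> U" using sub l0 by (meson nth_mem mod_less_divisor subsetD)
    ultimately show ?case using Suc cl by auto
  qed
  show ?thesis
  proof
    fix v assume "v \<in> set c"
    then obtain t where t: "t < ?l" "c!t = v" by (auto simp: in_set_conv_nth)
    have "(j + (t + ?l - j)) mod ?l = t" using t j by simp
    then show "v \<in> R" using all[of "t + ?l - j"] t by simp
  qed
qed

lemma multi:
  assumes "finite U" and loops: "\<forall>v. (v,v) \<notin> E"
  shows "Y \<subseteq> U \<Longrightarrow> \<exists>R d. Y \<subseteq> R \<and> R \<subseteq> U \<and> (\<forall>v\<in>R. \<forall>w\<in>U. (v,w) \<in> E \<longrightarrow> w \<in> R)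
     \<and> (\<forall>v\<in>R. \<exists>y\<in>Y. pth E R y v (d v)) \<and> good E R d"
  using assms(1)
proof (induction U arbitrary: Y rule: finite_psubset_induct)
  case (psubset U)
  show ?case
  proof (cases "Y = {}")
    case True
    have "good E {} (\<lambda>_. 0)" unfolding good_def is_cycle_def by auto
    then show ?thesis using True by (intro exI[of _ "{}"] exI[of _ "\<lambda>_. 0"]) auto
  next
    case False
    then obtain x where x: "x \<in> Y" by blast
    have xU: "x \<in> U" using x psubset.prems by blast
    define U' where "U' = U - {x}"
    define N where "N = {y \<in> U'. (x,y) \<in> E}"
    have "U' \<subset> U" using xU U'_def by blast
    moreover have "N \<subseteq> U'" using N_def by blast
    ultimately have "\<exists>R d. N \<subseteq> R \<and> R \<subseteq> U' \<and> (\<forall>v\<in>R. \<forall>w\<in>U'. (v,w) \<in> E \<longrightarrow> w \<in> R)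
     \<and> (\<forall>v\<in>R. \<exists>y\<in>N. pth E R y v (d v)) \<and> good E R d" by (rule psubset.IH)
    then obtain R' d' where R': "N \<subseteq> R'" "R' \<subseteq> U'"
      "\<forall>v\<in>R'. \<forall>w\<in>U'. (v,w) \<in> E \<longrightarrow> w \<in> R'" "\<forall>v\<in>R'. \<exists>y\<in>N. pth E R' y v (d' v)" "good E R' d'"
      by blast
    define R1 where "R1 = insert x R'"
    define d1 where "d1 v = (if v = x then 0 else Suc (d' v))" for v
    have xR': "x \<notin> R'" using R' U'_def by blast
    have R1U: "R1 \<subseteq> U" using R' U'_def R1_def xU by blast
    have cl1: "\<forall>v\<in>R1. \<forall>w\<in>U. (v,w)\<in>E \<longrightarrow> w \<in> R1"
    proof (intro ballI impI)
      fix v w assume v: "v \<in> R1" and w: "w \<in> U" and e: "(v,w) \<in> E"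
      show "w \<in> R1"
      proof (cases "w = x")
        case True then show ?thesis by (simp add: R1_def)
      next
        case False
        then have wU': "w \<in> U'" using w U'_def by blast
        show ?thesis
        proof (cases "v = x")
          case True then show ?thesis using wU' e N_def R' R1_def by blast
        next
          case False then show ?thesis using v wU' e R' R1_def by blast
        qed
      qed
    qed
    have p1: "\<forall>v\<in>R1. pth E R1 x v (d1 v)"
    proof
      fix v assume v: "v \<in> R1"
      show "pth E R1 x v (d1 v)"
      proof (cases "v = x")
        case True then show ?thesis by (simp add: d1_def R1_def pth_refl)
      next
        case False
        then have "v \<in> R'" using v R1_def by blast
        then obtain y where y: "y \<in> N" "pth E R' y v (d' v)" using R' by blast
        have "(x,y) \<in> E" using y N_def by blast
        then have "pth E (insert x R') x v (Suc (d' v))" using pth_cons[OF y(2) xR'] by blast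
        then show ?thesis using False by (simp add: d1_def R1_def)
      qed
    qed
    have g1: "good E R1 d1"
      unfolding good_def
    proof (intro allI impI)
      fix c assume cc: "is_cycle E c \<and> set c \<subseteq> R1"
      let ?l = "length c"
      show "\<exists>i<?l. \<exists>c'. is_cycle E c' \<and> int (length c') = int (d1 (c!i)) - int (d1 (c!((i+1) mod ?l))) + 1"
      proof (cases "x \<in> set c")
        case True
        then obtain j where j: "j < ?l" "c!j = x" by (auto simp: in_set_conv_nth)
        define i where "i = (j + ?l - 1) mod ?l"
        have l0: "?l > 0" using j(1) by linarith
        have il: "i < ?l" unfolding i_def using l0 by (rule mod_less_divisor)
        have ij: "(i+1) mod ?l = j"
        proof -
          have "(i+1) mod ?l = (j + ?l - 1 + 1) mod ?l" unfolding i_def by (simp add: mod_Suc_eq)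
          also have "j + ?l - 1 + 1 = j + ?l" using j by simp
          finally show ?thesis using j by simp
        qed
        have e: "(c!i, x) \<in> E" using cc il ij j unfolding is_cycle_def by metis
        then have ux: "c!i \<noteq> x" using loops by blast
        have "c!i \<in> R1" using cc il nth_mem by blast
        then have pu: "pth E R1 x (c!i) (d1 (c!i))" using p1 by blast
        obtain c' where c': "is_cycle E c'" "length c' = Suc (d1 (c!i))" using pth_cycle[OF pu e] by blast
        have "d1 (c!((i+1) mod ?l)) = 0" using ij j by (simp add: d1_def)
        then show ?thesis using il c' by (intro exI[of _ i] conjI exI[of _ c']) auto
      next
        case False
        then have "set c \<subseteq> R'" using cc R1_def by blast
        then obtain i c' where i: "i < ?l" "is_cycle E c'"
          "int (length c') = int (d' (c!i)) - int (d' (c!((i+1) mod ?l))) + 1"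
          using R'(5)[unfolded good_def, rule_format, of c] cc \<open>set c \<subseteq> R'\<close> by blast
        have "c!i \<noteq> x" using False i nth_mem by metis
        moreover have "c!((i+1) mod ?l) \<noteq> x" using False i nth_mem
          by (metis mod_less_divisor gr_implies_not0 neq0_conv)
        ultimately show ?thesis using i by (intro exI[of _ i]) (auto simp: d1_def)
      qed
    qed
    define U2 where "U2 = U - R1"
    define Y2 where "Y2 = Y - R1"
    have "U2 \<subset> U" using U2_def xU R1_def by blast
    moreover have "Y2 \<subseteq> U2" using Y2_def U2_def psubset.prems by blast
    ultimately have "\<exists>R d. Y2 \<subseteq> R \<and> R \<subseteq> U2 \<and> (\<forall>v\<in>R. \<forall>w\<in>U2. (v,w) \<in> E \<longrightarrow> w \<in> R)
     \<and> (\<forall>v\<in>R. \<exists>y\<in>Y2. pth E R y v (d v)) \<and> good E R d" by (rule psubset.IH)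
    then obtain R2 d2 where R2: "Y2 \<subseteq> R2" "R2 \<subseteq> U2"
      "\<forall>v\<in>R2. \<forall>w\<in>U2. (v,w) \<in> E \<longrightarrow> w \<in> R2" "\<forall>v\<in>R2. \<exists>y\<in>Y2. pth E R2 y v (d2 v)" "good E R2 d2"
      by blast
    define R where "R = R1 \<union> R2"
    define d where "d v = (if v \<in> R1 then d1 v else d2 v)" for v
    have "Y \<subseteq> R" using R2 Y2_def R_def by blast
    moreover have "R \<subseteq> U" using R1U R2 U2_def R_def by blast
    moreover have "\<forall>v\<in>R. \<forall>w\<in>U. (v,w) \<in> E \<longrightarrow> w \<in> R"
      using cl1 R2(3) U2_def R_def by blast
    moreover have "\<forall>v\<in>R. \<exists>y\<in>Y. pth E R y v (d v)"
    proof
      fix v assume v: "v \<in> R"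
      show "\<exists>y\<in>Y. pth E R y v (d v)"
      proof (cases "v \<in> R1")
        case True
        then show ?thesis using p1 x pth_mono[of E R1 x v "d1 v" R] R_def d_def by auto
      next
        case False
        then have "v \<in> R2" using v R_def by blast
        then obtain y where "y \<in> Y2" "pth E R2 y v (d2 v)" using R2 by blast
        then show ?thesis using False pth_mono[of E R2 y v "d2 v" R] R_def d_def Y2_def by auto
      qed
    qed
    moreover have "good E R d"
      unfolding good_def
    proof (intro allI impI)
      fix c assume cc: "is_cycle E c \<and> set c \<subseteq> R"
      let ?l = "length c"
      have lp: "?l > 0" using cc unfolding is_cycle_def by simp
      show "\<exists>i<?l. \<exists>c'. is_cycle E c' \<and> int (length c') = int (d (c!i)) - int (d (c!((i+1) mod ?l))) + 1"
      proof (cases "set c \<inter> R1 = {}")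
        case True
        then have "set c \<subseteq> R2" using cc R_def by blast
        then obtain i c' where i: "i < ?l" "is_cycle E c'"
          "int (length c') = int (d2 (c!i)) - int (d2 (c!((i+1) mod ?l))) + 1"
          using R2(5)[unfolded good_def, rule_format, of c] cc \<open>set c \<subseteq> R2\<close> by blast
        have "c!i \<notin> R1" using True i nth_mem by blast
        moreover have "c!((i+1) mod ?l) \<notin> R1" using True lp nth_mem
          by (metis disjoint_iff mod_less_divisor)
        ultimately show ?thesis using i by (intro exI[of _ i]) (auto simp: d_def)
      next
        case False
        have "set c \<subseteq> U" using cc \<open>R \<subseteq> U\<close> by blast
        then have sc: "set c \<subseteq> R1" using cycle_closed[of E c U R1] cc False cl1 by blast
        then obtain i c' where i: "i < ?l" "is_cycle E c'"
          "int (length c') = int (d1 (c!i)) - int (d1 (c!((i+1) mod ?l))) + 1"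
          using g1[unfolded good_def, rule_format, of c] cc sc by blast
        have "c!i \<in> R1" using sc i nth_mem by blast
        moreover have "c!((i+1) mod ?l) \<in> R1" using sc lp nth_mem
          by (metis mod_less_divisor subsetD)
        ultimately show ?thesis using i by (intro exI[of _ i]) (auto simp: d_def)
      qed
    qed
    ultimately show ?thesis by (intro exI[of _ R] exI[of _ d] conjI)
  qed
qed

lemma arith_key:
  fixes x y p M :: int
  assumes "p > 0" "M > 0" "nat ((x mod M) div p) = nat ((y mod M) div p)"
  shows "-p + 2 \<le> x mod M - y mod M + 1 \<and> x mod M - y mod M + 1 \<le> p
     \<and> [x - y + 1 = x mod M - y mod M + 1] (mod M)"
proof -
  define a where "a = x mod M"
  define b where "b = y mod M"
  have a0: "a \<ge> 0" "b \<ge> 0" using assms a_def b_def by simp_all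
  then have "a div p \<ge> 0" "b div p \<ge> 0" using assms by (simp_all add: pos_imp_zdiv_nonneg_iff)
  then have q: "a div p = b div p" using assms(3) a_def b_def by simp
  have "a = p * (b div p) + a mod p" using q mult_div_mod_eq[of p a] by simp
  moreover have "b = p * (b div p) + b mod p" by simp
  moreover have "0 \<le> a mod p" "a mod p < p" "0 \<le> b mod p" "b mod p < p" using assms by simp_all
  ultimately have "-p + 2 \<le> a - b + 1 \<and> a - b + 1 \<le> p" by linarith
  moreover have "(x - y + 1) mod M = (x mod M - y mod M + 1) mod M" by (metis mod_add_left_eq mod_diff_eq)
  ultimately show ?thesis unfolding cong_def a_def b_def by simp
qed

theorem theorem2:
  fixes V :: "'a set" and E :: "('a \<times> 'a) set" and k p :: int
  assumes "digraph V E"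
    and "strongly_connected V E"
    and "\<exists>c. is_cycle E c"
    and "k \<ge> int (girth E) - 1" and "int (girth E) - 1 \<ge> p" and "p \<ge> 1"
    and "\<forall>c. is_cycle E c \<longrightarrow>
           \<not> (\<exists>r::int. - p + 2 \<le> r \<and> r \<le> p \<and>
                 [int (length c) = r] (mod (\<lceil>of_int k / of_int p :: real\<rceil> * p)))"
  shows "int (dichromatic_number V E) \<le> \<lceil>of_int k / of_int p :: real\<rceil>"
proof -
  have fin: "finite V" and EV: "E \<subseteq> V \<times> V" and loops: "\<forall>v. (v,v) \<notin> E"
    using assms(1) unfolding digraph_def by auto
  obtain R d where Rd: "V \<subseteq> R" "R \<subseteq> V" "good E R d"
    using multi[OF fin loops, of V] by blast
  have gd: "good E V d" using Rd by (metis subset_antisym)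
  define K where "K = \<lceil>of_int k / of_int p :: real\<rceil>"
  have kp: "k \<ge> p" using assms(4,5) by linarith
  have "(1::real) \<le> of_int k / of_int p" using kp assms(6) by (simp add: divide_simps)
  moreover have "of_int k / of_int p \<le> (of_int K :: real)" unfolding K_def by (rule le_of_int_ceiling)
  ultimately have K1: "K \<ge> 1" by linarith
  define M where "M = K * p"
  have M0: "M > 0" using K1 assms(6) M_def by simp
  define f where "f v = nat ((int (d v) mod M) div p)" for v
  have "dichromatic_number V E \<le> nat K"
    unfolding dichromatic_number_def
  proof (rule Least_le, intro exI conjI)
    show "\<forall>v\<in>V. f v < nat K"
    proof
      fix v assume "v \<in> V"
      have "int (d v) mod M < K * p" using M0 M_def by simp
      moreover have "p * ((int (d v) mod M) div p) + (int (d v) mod M) mod p = int (d v) mod M"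
        by (rule mult_div_mod_eq)
      moreover have "(int (d v) mod M) mod p \<ge> 0" using assms(6) by simp
      ultimately have "p * ((int (d v) mod M) div p) < K * p" by linarith
      then have "p * ((int (d v) mod M) div p) < p * K" by (metis mult.commute)
      then have "(int (d v) mod M) div p < K" using assms(6)
        by (simp add: mult_less_cancel_left_pos)
      moreover have "(int (d v) mod M) div p \<ge> 0" using M0 assms(6) by (simp add: pos_imp_zdiv_nonneg_iff)
      ultimately show "f v < nat K" unfolding f_def by simp
    qed
    show "\<forall>i<nat K. acyclic_set E {v \<in> V. f v = i}"
    proof (intro allI impI)
      fix i assume "i < nat K"
      show "acyclic_set E {v \<in> V. f v = i}"
        unfolding acyclic_set_def
      proof
        assume "\<exists>c. is_cycle E c \<and> set c \<subseteq> {v \<in> V. f v = i}"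
        then obtain c where c: "is_cycle E c" "set c \<subseteq> {v \<in> V. f v = i}" by blast
        let ?l = "length c"
        have lp: "?l > 0" using c unfolding is_cycle_def by simp
        obtain j c' where j: "j < ?l" "is_cycle E c'"
          "int (length c') = int (d (c!j)) - int (d (c!((j+1) mod ?l))) + 1"
          using gd c unfolding good_def by blast
        have "f (c!j) = i" using c j nth_mem by blast
        moreover have "f (c!((j+1) mod ?l)) = i" using c lp nth_mem
          by (metis (mono_tags, lifting) mem_Collect_eq mod_less_divisor subsetD)
        ultimately have "nat ((int (d (c!j)) mod M) div p) = nat ((int (d (c!((j+1) mod ?l))) mod M) div p)"
          unfolding f_def by simp
        from arith_key[OF _ M0 this] assms(6)
        have ak: "- p + 2 \<le> int (d (c!j)) mod M - int (d (c!((j+1) mod ?l))) mod M + 1 \<and>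
          int (d (c!j)) mod M - int (d (c!((j+1) mod ?l))) mod M + 1 \<le> p \<and>
          [int (length c') = int (d (c!j)) mod M - int (d (c!((j+1) mod ?l))) mod M + 1] (mod M)"
          unfolding j(3) by simp
        have "\<exists>r::int. - p + 2 \<le> r \<and> r \<le> p \<and> [int (length c') = r] (mod M)"
          by (rule exI, rule ak)
        then show False using assms(7) j(2) unfolding M_def K_def by blast
      qed
    qed
  qed
  then have "int (dichromatic_number V E) \<le> K" using K1 by linarith
  then show ?thesis unfolding K_def .
qed

end
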